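(* Let $u,v,w$ be unit vectors in an inner product space (over $\mathbb{R}$ or $\mathbb{C}$). Then for every real $k\ge2$, $$\sqrt[k]{1-|\langle u,v\rangle|^k}\le\sqrt[k]{1-|\langle u,w\rangle|^k}+\sqrt[k]{1-|\langle w,v\rangle|^k};$$ in particular $$\sqrt{1-|\langle u,v\rangle|^2}\le\sqrt{1-|\langle u,w\rangle|^2}+\sqrt{1-|\langle w,v\rangle|^2}.$$ The same inequalities hold with $|\operatorname{Re}\langle\cdot,\cdot\rangle|$ in place of $|\langle\cdot,\cdot\rangle|$. *)

theory Defs
  imports "HOL-Analysis.Analysis"
begin

text \<open>A complex inner product space: an abelian group 'a with a complex scalar
multiplication sc making it a vector space over the complex numbers, and a
function ip that is linear in the first argument, conjugate symmetric and
positive definite.  (HOL-Analysis only provides real inner product spaces,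
class real_inner.)\<close>

definition complex_inner_product_space ::
  "(complex \<Rightarrow> 'a::ab_group_add \<Rightarrow> 'a) \<Rightarrow> ('a \<Rightarrow> 'a \<Rightarrow> complex) \<Rightarrow> bool" where
  "complex_inner_product_space sc ip \<longleftrightarrow>
     vector_space sc \<and>
     (\<forall>x y z. ip (x + y) z = ip x z + ip y z) \<and>
     (\<forall>c x y. ip (sc c x) y = c * ip x y) \<and>
     (\<forall>x y. ip y x = cnj (ip x y)) \<and>
     (\<forall>x. 0 \<le> Re (ip x x)) \<and>
     (\<forall>x. ip x x = 0 \<longrightarrow> x = 0)"

end

theory Submission
  imports Defs
begin

lemma H_mono:
  fixes p r1 r2 :: real
  assumes "1 \<le> r1" "r1 \<le> r2" "1 \<le> p"
  shows "r1 powr p - (r1-1) powr p \<le> r2 powr p - (r2-1) powr p"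
proof (rule DERIV_nonneg_imp_increasing_open[OF assms(2)])
  fix x assume x: "r1 < x" "x < r2"
  have "DERIV (\<lambda>x. x powr p - (x-1) powr p) x :> p * x powr (p-1) - p * (x-1) powr (p-1) * 1"
    using x assms by (auto intro!: derivative_eq_intros)
  moreover have "p * (x-1) powr (p-1) \<le> p * x powr (p-1)"
    using x assms by (intro mult_left_mono powr_mono2) auto
  ultimately show "\<exists>y. DERIV (\<lambda>x. x powr p - (x-1) powr p) x :> y \<and> y \<ge> 0" by auto
next
  show "continuous_on {r1..r2} (\<lambda>x. x powr p - (x-1) powr p)"
    using assms by (auto intro!: continuous_intros continuous_on_powr')
qed

lemma key_s:
  fixes p s1 s2 :: real
  assumes "0 < s1" "s1 \<le> s2" "s2 \<le> 1" "1 \<le> p"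
  shows "s1 powr p * (1 - (1-s2) powr p) \<le> s2 powr p * (1 - (1-s1) powr p)"
proof -
  have h: "(1/s2) powr p - (1/s2-1) powr p \<le> (1/s1) powr p - (1/s1-1) powr p"
    using assms by (intro H_mono) (auto simp: field_simps)
  have e: "s powr p * ((1/s) powr p - (1/s-1) powr p) = 1 - (1-s) powr p" if "0<s" "s \<le> 1" for s
  proof -
    have "s powr p * (1/s-1) powr p = (s * (1/s-1)) powr p"
      using that by (subst powr_mult) auto
    also have "s * (1/s-1) = 1 - s" using that by (simp add: field_simps)
    finally have a: "s powr p * (1/s-1) powr p = (1-s) powr p" .
    have b: "s powr p * (1/s) powr p = 1" using that by (simp add: powr_divide)
    show ?thesis using a b by (simp add: right_diff_distrib)
  qed
  have "s1 powr p * (1 - (1-s2) powr p) = s1 powr p * s2 powr p * ((1/s2) powr p - (1/s2-1) powr p)"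
    using e[of s2] assms by simp
  also have "\<dots> \<le> s1 powr p * s2 powr p * ((1/s1) powr p - (1/s1-1) powr p)"
    using h by (intro mult_left_mono) auto
  also have "\<dots> = s2 powr p * (1 - (1-s1) powr p)"
    using e[of s1] assms by simp
  finally show ?thesis .
qed

definition phi :: "real \<Rightarrow> real \<Rightarrow> real" where
  "phi k t = (1 - (1 - t^2) powr (k/2)) powr (1/k)"

lemma phi_nonneg_base: "0 \<le> (t::real) \<Longrightarrow> t \<le> 1 \<Longrightarrow> 2 \<le> k \<Longrightarrow> 0 \<le> 1 - (1 - t^2) powr (k/2)"
proof -
  assume a: "0 \<le> t" "t \<le> 1" "2 \<le> k"
  have "(1 - t^2) powr (k/2) \<le> (1 - t^2) powr 1"
    using a by (intro powr_mono') (auto simp: power_le_one)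
  also have "\<dots> \<le> 1" using a power_le_one[of t 2] by simp
  finally show ?thesis by simp
qed

lemma phi_star:
  assumes "0 < t1" "t1 \<le> t2" "t2 \<le> 1" "2 \<le> k"
  shows "t1 * phi k t2 \<le> t2 * phi k t1"
proof -
  let ?p = "k/2"
  have kp: "1 \<le> ?p" using assms by simp
  have B1: "0 \<le> 1 - (1 - t1^2) powr ?p" and B2: "0 \<le> 1 - (1 - t2^2) powr ?p"
    using phi_nonneg_base assms by auto
  have t: "t powr k = (t^2) powr ?p" if "0 < t" for t :: real
  proof -
    have "t powr k = (t powr 2) powr ?p" by (simp add: powr_powr)
    also have "t powr 2 = t^2" using that by simp
    finally show ?thesis .
  qed
  have "(t1 * phi k t2) powr k = t1 powr k * (1 - (1 - t2^2) powr ?p)"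
    using assms B2 by (simp add: phi_def powr_mult powr_powr)
  also have "\<dots> = (t1^2) powr ?p * (1 - (1 - t2^2) powr ?p)" using t assms by simp
  also have "\<dots> \<le> (t2^2) powr ?p * (1 - (1 - t1^2) powr ?p)"
    using assms kp by (intro key_s) (auto simp: power_mono power_le_one)
  also have "\<dots> = t2 powr k * (1 - (1 - t1^2) powr ?p)" using t assms by simp
  also have "\<dots> = (t2 * phi k t1) powr k"
    using assms B1 by (simp add: phi_def powr_mult powr_powr)
  finally have "(t1 * phi k t2) powr k \<le> (t2 * phi k t1) powr k" .
  then have "((t1 * phi k t2) powr k) powr (1/k) \<le> ((t2 * phi k t1) powr k) powr (1/k)"
    by (rule powr_mono2[rotated 2]) (use assms in auto)
  moreover have r: "(x powr k) powr (1/k) = x" if "0 \<le> x" for x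
    using that assms by (simp add: powr_powr)
  moreover have "0 \<le> phi k t1" "0 \<le> phi k t2" by (auto simp: phi_def)
  ultimately show ?thesis using assms by simp
qed

lemma phi_zero[simp]: "2 \<le> k \<Longrightarrow> phi k 0 = 0"
  by (simp add: phi_def)

lemma phi_one[simp]: "2 \<le> k \<Longrightarrow> phi k 1 = 1"
  by (simp add: phi_def)

lemma phi_nonneg: "0 \<le> phi k t" by (simp add: phi_def)

lemma phi_le_one:
  assumes "0 \<le> t" "t \<le> 1" "2 \<le> k" shows "phi k t \<le> 1"
proof -
  have "0 \<le> 1 - (1 - t^2) powr (k/2)" using phi_nonneg_base assms by auto
  moreover have "1 - (1 - t^2) powr (k/2) \<le> 1" by simp
  ultimately show ?thesis unfolding phi_def using assms
    by (intro powr_le1) auto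
qed

lemma phi_mono:
  assumes "0 \<le> t1" "t1 \<le> t2" "t2 \<le> 1" "2 \<le> k" shows "phi k t1 \<le> phi k t2"
proof -
  have "t1^2 \<le> t2^2" using assms by (intro power_mono) auto
  then have "(1 - t2^2) powr (k/2) \<le> (1 - t1^2) powr (k/2)"
    using assms power_le_one[of t2 2] by (intro powr_mono2) auto
  then show ?thesis unfolding phi_def
    using phi_nonneg_base[of t2 k] phi_nonneg_base[of t1 k] assms by (intro powr_mono2) auto
qed

lemma phi_sub:
  assumes "0 \<le> x" "0 \<le> y" "x + y \<le> 1" "2 \<le> k"
  shows "phi k (x+y) \<le> phi k x + phi k y"
proof (cases "x = 0 \<or> y = 0")
  case True then show ?thesis using assms phi_nonneg[of k] by auto
next
  case False
  then have xy: "0 < x" "0 < y" using assms by auto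
  have 1: "x * phi k (x+y) \<le> (x+y) * phi k x" using xy assms by (intro phi_star) auto
  have 2: "y * phi k (y+x) \<le> (y+x) * phi k y" using xy assms by (intro phi_star) auto
  have "(x+y) * phi k (x+y) \<le> (x+y) * (phi k x + phi k y)"
    using 1 2 by (simp add: algebra_simps add.commute)
  then show ?thesis using xy by (simp add: mult_le_cancel_left_pos)
qed

lemma phi_ge:
  assumes "0 \<le> t" "t \<le> 1" "2 \<le> k" shows "t \<le> phi k t"
proof (cases "t = 0")
  case True then show ?thesis using phi_nonneg by simp
next
  case False
  then have "t * phi k 1 \<le> 1 * phi k t" using assms by (intro phi_star) auto
  then show ?thesis using assms by simp
qed

lemma phi_conv:
  assumes "0 \<le> a" "a \<le> 1" "2 \<le> k"
  shows "(1 - a powr k) powr (1/k) = phi k (sqrt (1 - a^2))"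
proof -
  have s: "(sqrt (1 - a^2))^2 = 1 - a^2" using assms power_le_one[of a 2] by simp
  have "(a^2) powr (k/2) = a powr k"
  proof (cases "a = 0")
    case True then show ?thesis using assms by simp
  next
    case False
    then have "a powr k = (a powr 2) powr (k/2)" by (simp add: powr_powr)
    also have "a powr 2 = a^2" using assms by simp
    finally show ?thesis by simp
  qed
  then show ?thesis unfolding phi_def s by simp
qed

lemma scalar_sqrt:
  fixes a b c :: real
  assumes "0 \<le> a" "a \<le> 1" "0 \<le> b" "b \<le> 1" "0 \<le> c" "c \<le> 1"
    and H: "a*b - sqrt(1-a^2) * sqrt(1-b^2) \<le> c"
  shows "sqrt (1-c^2) \<le> sqrt(1-a^2) + sqrt(1-b^2)"
proof -
  define ya where "ya = sqrt(1-a^2)"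
  define yb where "yb = sqrt(1-b^2)"
  have ya: "ya^2 = 1 - a^2" "0 \<le> ya" "ya \<le> 1" unfolding ya_def using assms power_le_one[of a 2] by auto
  have yb: "yb^2 = 1 - b^2" "0 \<le> yb" "yb \<le> 1" unfolding yb_def using assms power_le_one[of b 2] by auto
  have H': "a*b - ya*yb \<le> c" using H unfolding ya_def yb_def .
  have c1: "sqrt (1-c^2) \<le> 1" using assms by simp
  show ?thesis unfolding ya_def[symmetric] yb_def[symmetric]
  proof (cases "a*b \<le> ya*yb")
    case True
    have "(a*b)^2 \<le> (ya*yb)^2" using True assms ya yb by (intro power_mono) auto
    then have "a^2 * b^2 \<le> ya^2 * yb^2" by (simp only: power_mult_distrib)
    also have "ya^2 * yb^2 = 1 - a^2 - b^2 + a^2 * b^2" unfolding ya yb by (simp add: algebra_simps)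
    finally have "a^2 \<le> yb^2" using yb by linarith
    then have "a \<le> yb" using yb(2) by (rule power2_le_imp_le)
    moreover have "ya*ya \<le> ya" by (rule mult_left_le) (use ya in auto)
    moreover have "a*a \<le> a" by (rule mult_left_le) (use assms in auto)
    moreover have "ya*ya + a*a = 1" using ya(1) unfolding power2_eq_square by linarith
    ultimately have "1 \<le> ya + yb" by linarith
    then show "sqrt (1-c^2) \<le> ya + yb" using c1 by linarith
  next
    case False
    then have "(a*b - ya*yb)^2 \<le> c^2" using H' assms
      by (intro power_mono) auto
    moreover have "(a*b - ya*yb)^2 + (ya*b + a*yb)^2 = 1"
    proof -
      have "(a*b - ya*yb)^2 + (ya*b + a*yb)^2 = (a^2 + ya^2) * (b^2 + yb^2)" by (simp add: power2_eq_square algebra_simps)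
      then show ?thesis unfolding ya yb by simp
    qed
    ultimately have "1 - c^2 \<le> (ya*b + a*yb)^2" by linarith
    then have "sqrt (1-c^2) \<le> sqrt ((ya*b + a*yb)^2)" by (rule real_sqrt_le_mono)
    also have "\<dots> = ya*b + a*yb" using ya yb assms by simp
    also have "\<dots> \<le> ya + yb"
    proof -
      have "ya*b \<le> ya" by (rule mult_left_le) (use assms ya in auto)
      moreover have "yb*a \<le> yb" by (rule mult_left_le) (use assms yb in auto)
      ultimately show ?thesis by (simp add: mult.commute)
    qed
    finally show "sqrt (1-c^2) \<le> ya + yb" .
  qed
qed

lemma scalar_powr:
  fixes a b c k :: real
  assumes "0 \<le> a" "a \<le> 1" "0 \<le> b" "b \<le> 1" "0 \<le> c" "c \<le> 1" "2 \<le> k"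
    and H: "a*b - sqrt(1-a^2) * sqrt(1-b^2) \<le> c"
  shows "(1 - c powr k) powr (1/k) \<le> (1 - a powr k) powr (1/k) + (1 - b powr k) powr (1/k)"
proof -
  define ya where "ya = sqrt(1-a^2)"
  define yb where "yb = sqrt(1-b^2)"
  define yc where "yc = sqrt(1-c^2)"
  have r: "0 \<le> sqrt(1-x^2)" "sqrt(1-x^2) \<le> 1" if "0 \<le> x" "x \<le> 1" for x :: real
    using that power_le_one[of x 2] by auto
  have S: "yc \<le> ya + yb" unfolding ya_def yb_def yc_def using scalar_sqrt assms by blast
  show ?thesis unfolding phi_conv[OF assms(1,2,7)] phi_conv[OF assms(3,4,7)] phi_conv[OF assms(5,6,7)]
    unfolding ya_def[symmetric] yb_def[symmetric] yc_def[symmetric]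
  proof (cases "1 \<le> ya + yb")
    case True
    have "phi k yc \<le> 1" using r[of c] assms unfolding yc_def by (intro phi_le_one) auto
    also have "1 \<le> phi k ya + phi k yb" using True phi_ge[of ya k] phi_ge[of yb k] r[of a] r[of b] assms
      unfolding ya_def yb_def by linarith
    finally show "phi k yc \<le> phi k ya + phi k yb" .
  next
    case False
    have "phi k yc \<le> phi k (ya + yb)" using S False r[of c] assms unfolding yc_def
      by (intro phi_mono) auto
    also have "\<dots> \<le> phi k ya + phi k yb" using False r[of a] r[of b] assms unfolding ya_def yb_def
      by (intro phi_sub) auto
    finally show "phi k yc \<le> phi k ya + phi k yb" .
  qed
qed


context
  fixes sc :: "complex \<Rightarrow> 'b::ab_group_add \<Rightarrow> 'b" and ip :: "'b \<Rightarrow> 'b \<Rightarrow> complex"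
  assumes csp: "complex_inner_product_space sc ip"
begin

lemmas csp' = csp[unfolded complex_inner_product_space_def]
lemma ip_add_l: "ip (x + y) z = ip x z + ip y z"
proof -
  from csp' have "\<forall>x y z. ip (x + y) z = ip x z + ip y z" by (elim conjE) assumption
  then show ?thesis by simp
qed
lemma ip_scale_l: "ip (sc c x) y = c * ip x y"
proof -
  from csp' have "\<forall>c x y. ip (sc c x) y = c * ip x y" by (elim conjE) assumption
  then show ?thesis by simp
qed
lemma ip_cnj: "ip y x = cnj (ip x y)"
proof -
  from csp' have "\<forall>x y. ip y x = cnj (ip x y)" by (elim conjE) assumption
  then show ?thesis by (rule allE) (erule allE)
qed
lemma ip_pos: "0 \<le> Re (ip x x)"
proof -
  from csp' have "\<forall>x. 0 \<le> Re (ip x x)" by (elim conjE) assumption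
  then show ?thesis by simp
qed
lemma ip_def0: "ip x x = 0 \<Longrightarrow> x = 0"
proof -
  from csp' have "\<forall>x. ip x x = 0 \<longrightarrow> x = 0" by (elim conjE) assumption
  then show "ip x x = 0 \<Longrightarrow> x = 0" by blast
qed

lemma ip_zero_l: "ip 0 z = 0"
  using ip_add_l[of 0 0 z] by simp
lemma ip_diff_l: "ip (x - y) z = ip x z - ip y z"
  using ip_add_l[of "x - y" y z] by (simp add: algebra_simps)
lemma ip_diff_r: "ip z (x - y) = ip z x - ip z y"
proof -
  have "ip z (x-y) = cnj (ip (x-y) z)" by (rule ip_cnj)
  also have "\<dots> = cnj (ip x z) - cnj (ip y z)" by (simp add: ip_diff_l)
  also have "\<dots> = ip z x - ip z y" using ip_cnj[of z x] ip_cnj[of z y] by simp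
  finally show ?thesis .
qed
lemma ip_scale_r: "ip x (sc c y) = cnj c * ip x y"
proof -
  have "ip x (sc c y) = cnj (ip (sc c y) x)" by (rule ip_cnj)
  also have "\<dots> = cnj c * cnj (ip y x)" by (simp add: ip_scale_l)
  also have "\<dots> = cnj c * ip x y" using ip_cnj[of x y] by simp
  finally show ?thesis .
qed
lemma ip_zero_r: "ip z 0 = 0"
proof -
  have "ip z 0 = cnj (ip 0 z)" by (rule ip_cnj)
  then show ?thesis by (simp add: ip_zero_l)
qed
lemma ip_self_real: "complex_of_real (Re (ip x x)) = ip x x"
proof -
  have "Im (ip x x) = Im (cnj (ip x x))" using ip_cnj[of x x] by (rule arg_cong)
  then have "Im (ip x x) = 0" by simp
  then show ?thesis by (simp add: complex_eq_iff)
qed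

lemma ip_CS: "cmod (ip a b) \<le> sqrt (Re (ip a a)) * sqrt (Re (ip b b))"
proof (cases "ip b b = 0")
  case True
  then have "b = 0" by (rule ip_def0)
  then show ?thesis by (simp add: ip_zero_r)
next
  case False
  define \<beta> where "\<beta> = Re (ip b b)"
  define \<mu> where "\<mu> = ip a b"
  have bb: "ip b b = complex_of_real \<beta>" unfolding \<beta>_def using ip_self_real by simp
  have "\<beta> \<noteq> 0" using False bb by auto
  moreover have "0 \<le> \<beta>" unfolding \<beta>_def by (rule ip_pos)
  ultimately have bpos: "0 < \<beta>" by simp
  define l where "l = \<mu> / complex_of_real \<beta>"
  define a' where "a' = a - sc l b"
  have "ip a' b = \<mu> - l * ip b b" unfolding a'_def \<mu>_def by (simp add: ip_diff_l ip_scale_l)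
  also have "\<dots> = 0" unfolding l_def bb using bpos by simp
  finally have a'b: "ip a' b = 0" .
  have "ip a' a' = ip a' (a - sc l b)" by (simp only: a'_def)
  also have "\<dots> = ip a' a - cnj l * ip a' b" by (simp add: ip_diff_r ip_scale_r)
  also have "\<dots> = ip a a - l * ip b a" unfolding a'b by (simp add: a'_def ip_diff_l ip_scale_l)
  also have "\<dots> = ip a a - l * cnj \<mu>" unfolding \<mu>_def using ip_cnj[of a b] by simp
  finally have "Re (ip a' a') = Re (ip a a) - Re (\<mu> * cnj \<mu>) / \<beta>" unfolding l_def by simp
  also have "Re (\<mu> * cnj \<mu>) = (cmod \<mu>)^2" by (simp add: complex_norm_square[symmetric] del: complex_mult_cnj)
  finally have "0 \<le> Re (ip a a) - (cmod \<mu>)^2 / \<beta>" using ip_pos[of a'] by simp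
  then have "(cmod \<mu>)^2 \<le> Re (ip a a) * \<beta>" using bpos by (simp add: field_simps)
  then have "sqrt ((cmod \<mu>)^2) \<le> sqrt (Re (ip a a) * \<beta>)" by (rule real_sqrt_le_mono)
  then show ?thesis unfolding \<mu>_def \<beta>_def by (simp add: real_sqrt_mult)
qed

lemma ip_le1:
  assumes "ip u u = 1" "ip v v = 1"
  shows "cmod (ip u v) \<le> 1"
  using ip_CS[of u v] assms by simp

lemma cgeom:
  assumes uu: "ip u u = 1" and vv: "ip v v = 1" and ww: "ip w w = 1"
  shows "cmod (ip u w) * cmod (ip w v) - sqrt (1 - (cmod (ip u w))^2) * sqrt (1 - (cmod (ip w v))^2) \<le> cmod (ip u v)"
proof -
  define x where "x = ip u w"
  define y where "y = ip w v"
  define z where "z = ip u v"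
  define u' where "u' = u - sc x w"
  define v' where "v' = v - sc (cnj y) w"
  have u'w: "ip u' w = 0" unfolding u'_def by (simp add: ip_diff_l ip_scale_l ww x_def)
  have wv': "ip w v' = 0" unfolding v'_def by (simp add: ip_diff_r ip_scale_r ww y_def)
  have "ip u' v' = ip u' v" unfolding v'_def by (simp add: ip_diff_r ip_scale_r u'w)
  also have "\<dots> = z - x * y" unfolding u'_def by (simp add: ip_diff_l ip_scale_l x_def y_def z_def)
  finally have uv: "ip u' v' = z - x * y" .
  have "ip u' u' = ip u' (u - sc x w)" by (simp only: u'_def)
  also have "\<dots> = ip u' u" by (simp add: ip_diff_r ip_scale_r u'w)
  also have "\<dots> = 1 - x * cnj x" unfolding u'_def using ip_cnj[of u w]
    by (simp add: ip_diff_l ip_scale_l uu x_def)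
  finally have uu': "Re (ip u' u') = 1 - (cmod x)^2" by (simp add: complex_norm_square[symmetric] del: complex_mult_cnj)
  have "ip v' v' = ip (v - sc (cnj y) w) v'" by (simp only: v'_def)
  also have "\<dots> = ip v v'" by (simp add: ip_diff_l ip_scale_l wv')
  also have "\<dots> = 1 - y * cnj y" unfolding v'_def using ip_cnj[of w v]
    by (simp add: ip_diff_r ip_scale_r vv y_def)
  finally have vv': "Re (ip v' v') = 1 - (cmod y)^2" by (simp add: complex_norm_square[symmetric] del: complex_mult_cnj)
  have "cmod (z - x*y) \<le> sqrt (1 - (cmod x)^2) * sqrt (1 - (cmod y)^2)"
    using ip_CS[of u' v'] unfolding uv uu' vv' .
  moreover have "cmod (x*y) \<le> cmod z + cmod (z - x*y)"
    using norm_triangle_ineq4[of z "z - x*y"] by simp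
  ultimately show ?thesis unfolding x_def[symmetric] y_def[symmetric] z_def[symmetric]
    by (simp add: norm_mult)
qed

lemma rgeom:
  assumes uu: "ip u u = 1" and vv: "ip v v = 1" and ww: "ip w w = 1"
  shows "\<bar>Re (ip u w)\<bar> * \<bar>Re (ip w v)\<bar> - sqrt (1 - \<bar>Re (ip u w)\<bar>^2) * sqrt (1 - \<bar>Re (ip w v)\<bar>^2) \<le> \<bar>Re (ip u v)\<bar>"
proof -
  define x where "x = Re (ip u w)"
  define y where "y = Re (ip w v)"
  define z where "z = Re (ip u v)"
  define u' where "u' = u - sc (complex_of_real x) w"
  define v' where "v' = v - sc (complex_of_real y) w"
  have u'w: "Re (ip u' w) = 0" unfolding u'_def by (simp add: ip_diff_l ip_scale_l ww x_def)
  have wv': "Re (ip w v') = 0" unfolding v'_def by (simp add: ip_diff_r ip_scale_r ww y_def)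
  have "Re (ip u' v') = Re (ip u' v)" unfolding v'_def by (simp add: ip_diff_r ip_scale_r u'w)
  also have "\<dots> = z - x * y" unfolding u'_def by (simp add: ip_diff_l ip_scale_l x_def y_def z_def)
  finally have uv: "Re (ip u' v') = z - x * y" .
  have "ip u' u' = ip u' (u - sc (complex_of_real x) w)" by (simp only: u'_def)
  then have "Re (ip u' u') = Re (ip u' u)" by (simp add: ip_diff_r ip_scale_r u'w)
  also have "\<dots> = 1 - x * x" unfolding u'_def using ip_cnj[of u w]
    by (simp add: ip_diff_l ip_scale_l uu x_def)
  finally have uu': "Re (ip u' u') = 1 - \<bar>x\<bar>^2" by (simp add: power2_eq_square)
  have "ip v' v' = ip (v - sc (complex_of_real y) w) v'" by (simp only: v'_def)
  then have "Re (ip v' v') = Re (ip v v')" by (simp add: ip_diff_l ip_scale_l wv')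
  also have "\<dots> = 1 - y * y" unfolding v'_def using ip_cnj[of w v]
    by (simp add: ip_diff_r ip_scale_r vv y_def)
  finally have vv': "Re (ip v' v') = 1 - \<bar>y\<bar>^2" by (simp add: power2_eq_square)
  have "\<bar>z - x*y\<bar> \<le> sqrt (1 - \<bar>x\<bar>^2) * sqrt (1 - \<bar>y\<bar>^2)"
    using abs_Re_le_cmod[of "ip u' v'"] ip_CS[of u' v'] unfolding uv uu' vv' by linarith
  moreover have "\<bar>x*y\<bar> \<le> \<bar>z\<bar> + \<bar>z - x*y\<bar>" by linarith
  ultimately show ?thesis unfolding x_def[symmetric] y_def[symmetric] z_def[symmetric]
    by (simp add: abs_mult)
qed

end


lemma real_geom:
  fixes u v w :: "'a::real_inner"
  assumes nu: "norm u = 1" and nv: "norm v = 1" and nw: "norm w = 1"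
  shows "\<bar>inner u w\<bar> * \<bar>inner w v\<bar> - sqrt (1 - \<bar>inner u w\<bar>^2) * sqrt (1 - \<bar>inner w v\<bar>^2) \<le> \<bar>inner u v\<bar>"
proof -
  define x where "x = inner u w"
  define y where "y = inner w v"
  define z where "z = inner u v"
  have ww: "inner w w = 1" using nw by (simp add: power2_norm_eq_inner[symmetric])
  have uu: "inner u u = 1" using nu by (simp add: power2_norm_eq_inner[symmetric])
  have vv: "inner v v = 1" using nv by (simp add: power2_norm_eq_inner[symmetric])
  define u' where "u' = u - x *\<^sub>R w"
  define v' where "v' = v - y *\<^sub>R w"
  have u'w: "inner u' w = 0" unfolding u'_def by (simp add: inner_diff_left ww x_def)
  have wv': "inner w v' = 0" unfolding v'_def by (simp add: inner_diff_right ww y_def)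
  have "inner u' v' = inner u' v" unfolding v'_def by (simp add: inner_diff_right u'w)
  also have "\<dots> = z - x * y" unfolding u'_def by (simp add: inner_diff_left x_def y_def z_def)
  finally have uv: "inner u' v' = z - x * y" .
  have "inner u' u' = inner u' (u - x *\<^sub>R w)" by (simp only: u'_def)
  also have "\<dots> = inner u' u" by (simp add: inner_diff_right u'w)
  also have "\<dots> = 1 - x * x" unfolding u'_def
    by (simp add: inner_diff_left uu x_def inner_commute[of w u])
  finally have uu': "norm u' = sqrt (1 - \<bar>x\<bar>^2)" by (simp add: norm_eq_sqrt_inner power2_eq_square)
  have "inner v' v' = inner (v - y *\<^sub>R w) v'" by (simp only: v'_def)
  also have "\<dots> = inner v v'" by (simp add: inner_diff_left wv')
  also have "\<dots> = 1 - y * y" unfolding v'_def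
    by (simp add: inner_diff_right vv y_def inner_commute[of v w])
  finally have vv': "norm v' = sqrt (1 - \<bar>y\<bar>^2)" by (simp add: norm_eq_sqrt_inner power2_eq_square)
  have "\<bar>z - x*y\<bar> \<le> sqrt (1 - \<bar>x\<bar>^2) * sqrt (1 - \<bar>y\<bar>^2)"
    using Cauchy_Schwarz_ineq2[of u' v'] unfolding uv uu' vv' .
  moreover have "\<bar>x*y\<bar> \<le> \<bar>z\<bar> + \<bar>z - x*y\<bar>" by linarith
  ultimately show ?thesis unfolding x_def[symmetric] y_def[symmetric] z_def[symmetric]
    by (simp add: abs_mult)
qed

lemma real_le1:
  fixes u v :: "'a::real_inner"
  assumes "norm u = 1" "norm v = 1"
  shows "\<bar>inner u v\<bar> \<le> 1"
  using Cauchy_Schwarz_ineq2[of u v] assms by simp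

lemma P1: "(\<forall>(u::'a::real_inner) v w (k::real).
            norm u = 1 \<and> norm v = 1 \<and> norm w = 1 \<and> 2 \<le> k \<longrightarrow>
              (1 - \<bar>inner u v\<bar> powr k) powr (1 / k)
                \<le> (1 - \<bar>inner u w\<bar> powr k) powr (1 / k) + (1 - \<bar>inner w v\<bar> powr k) powr (1 / k))"
proof (intro allI impI, elim conjE)
  fix u v w :: 'a and k :: real
  assume a: "norm u = 1" "norm v = 1" "norm w = 1" "2 \<le> k"
  show "(1 - \<bar>inner u v\<bar> powr k) powr (1 / k)
                \<le> (1 - \<bar>inner u w\<bar> powr k) powr (1 / k) + (1 - \<bar>inner w v\<bar> powr k) powr (1 / k)"
    using a real_geom[of u v w] real_le1[of u w] real_le1[of w v] real_le1[of u v]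
    by (intro scalar_powr) auto
qed

lemma P2: "(\<forall>(u::'a::real_inner) v w.
            norm u = 1 \<and> norm v = 1 \<and> norm w = 1 \<longrightarrow>
              sqrt (1 - \<bar>inner u v\<bar>^2)
                \<le> sqrt (1 - \<bar>inner u w\<bar>^2) + sqrt (1 - \<bar>inner w v\<bar>^2))"
proof (intro allI impI, elim conjE)
  fix u v w :: 'a
  assume a: "norm u = 1" "norm v = 1" "norm w = 1"
  show "sqrt (1 - \<bar>inner u v\<bar>^2)
                \<le> sqrt (1 - \<bar>inner u w\<bar>^2) + sqrt (1 - \<bar>inner w v\<bar>^2)"
    using a real_geom[of u v w] real_le1[of u w] real_le1[of w v] real_le1[of u v]
    by (intro scalar_sqrt) auto
qed

lemma P3: "(\<forall>(sc :: complex \<Rightarrow> 'b::ab_group_add \<Rightarrow> 'b) ip u v w (k::real).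
            complex_inner_product_space sc ip \<and>
            ip u u = 1 \<and> ip v v = 1 \<and> ip w w = 1 \<and> 2 \<le> k \<longrightarrow>
              (1 - cmod (ip u v) powr k) powr (1 / k)
                \<le> (1 - cmod (ip u w) powr k) powr (1 / k) + (1 - cmod (ip w v) powr k) powr (1 / k)
            \<and> sqrt (1 - (cmod (ip u v))^2)
                \<le> sqrt (1 - (cmod (ip u w))^2) + sqrt (1 - (cmod (ip w v))^2)
            \<and> (1 - \<bar>Re (ip u v)\<bar> powr k) powr (1 / k)
                \<le> (1 - \<bar>Re (ip u w)\<bar> powr k) powr (1 / k) + (1 - \<bar>Re (ip w v)\<bar> powr k) powr (1 / k)
            \<and> sqrt (1 - \<bar>Re (ip u v)\<bar>^2)
                \<le> sqrt (1 - \<bar>Re (ip u w)\<bar>^2) + sqrt (1 - \<bar>Re (ip w v)\<bar>^2))"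
proof (intro allI impI, elim conjE)
  fix sc :: "complex \<Rightarrow> 'b \<Rightarrow> 'b" and ip u v w and k :: real
  assume c: "complex_inner_product_space sc ip" and a: "ip u u = 1" "ip v v = 1" "ip w w = 1" "2 \<le> k"
  note g = cgeom[OF c a(1,2,3)] rgeom[OF c a(1,2,3)]
  have b: "cmod (ip u w) \<le> 1" "cmod (ip w v) \<le> 1" "cmod (ip u v) \<le> 1"
    using ip_le1[OF c] a by auto
  have br: "\<bar>Re (ip u w)\<bar> \<le> 1" "\<bar>Re (ip w v)\<bar> \<le> 1" "\<bar>Re (ip u v)\<bar> \<le> 1"
    using b abs_Re_le_cmod order_trans by blast+
  show "(1 - cmod (ip u v) powr k) powr (1 / k)
                \<le> (1 - cmod (ip u w) powr k) powr (1 / k) + (1 - cmod (ip w v) powr k) powr (1 / k)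
            \<and> sqrt (1 - (cmod (ip u v))^2)
                \<le> sqrt (1 - (cmod (ip u w))^2) + sqrt (1 - (cmod (ip w v))^2)
            \<and> (1 - \<bar>Re (ip u v)\<bar> powr k) powr (1 / k)
                \<le> (1 - \<bar>Re (ip u w)\<bar> powr k) powr (1 / k) + (1 - \<bar>Re (ip w v)\<bar> powr k) powr (1 / k)
            \<and> sqrt (1 - \<bar>Re (ip u v)\<bar>^2)
                \<le> sqrt (1 - \<bar>Re (ip u w)\<bar>^2) + sqrt (1 - \<bar>Re (ip w v)\<bar>^2)"
  proof (intro conjI)
    show "(1 - cmod (ip u v) powr k) powr (1 / k)
                \<le> (1 - cmod (ip u w) powr k) powr (1 / k) + (1 - cmod (ip w v) powr k) powr (1 / k)"
      using g b a by (intro scalar_powr) auto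
    show "sqrt (1 - (cmod (ip u v))^2) \<le> sqrt (1 - (cmod (ip u w))^2) + sqrt (1 - (cmod (ip w v))^2)"
      using g b a by (intro scalar_sqrt) auto
    show "(1 - \<bar>Re (ip u v)\<bar> powr k) powr (1 / k)
                \<le> (1 - \<bar>Re (ip u w)\<bar> powr k) powr (1 / k) + (1 - \<bar>Re (ip w v)\<bar> powr k) powr (1 / k)"
      using g br a by (intro scalar_powr) auto
    show "sqrt (1 - \<bar>Re (ip u v)\<bar>^2) \<le> sqrt (1 - \<bar>Re (ip u w)\<bar>^2) + sqrt (1 - \<bar>Re (ip w v)\<bar>^2)"
      using g br a by (intro scalar_sqrt) auto
  qed
qed

theorem corollary5:
  shows "(\<forall>(u::'a::real_inner) v w (k::real).
            norm u = 1 \<and> norm v = 1 \<and> norm w = 1 \<and> 2 \<le> k \<longrightarrow>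
              (1 - \<bar>inner u v\<bar> powr k) powr (1 / k)
                \<le> (1 - \<bar>inner u w\<bar> powr k) powr (1 / k) + (1 - \<bar>inner w v\<bar> powr k) powr (1 / k))
       \<and> (\<forall>(u::'a::real_inner) v w.
            norm u = 1 \<and> norm v = 1 \<and> norm w = 1 \<longrightarrow>
              sqrt (1 - \<bar>inner u v\<bar>^2)
                \<le> sqrt (1 - \<bar>inner u w\<bar>^2) + sqrt (1 - \<bar>inner w v\<bar>^2))
       \<and> (\<forall>(sc :: complex \<Rightarrow> 'b::ab_group_add \<Rightarrow> 'b) ip u v w (k::real).
            complex_inner_product_space sc ip \<and>
            ip u u = 1 \<and> ip v v = 1 \<and> ip w w = 1 \<and> 2 \<le> k \<longrightarrow>
              (1 - cmod (ip u v) powr k) powr (1 / k)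
                \<le> (1 - cmod (ip u w) powr k) powr (1 / k) + (1 - cmod (ip w v) powr k) powr (1 / k)
            \<and> sqrt (1 - (cmod (ip u v))^2)
                \<le> sqrt (1 - (cmod (ip u w))^2) + sqrt (1 - (cmod (ip w v))^2)
            \<and> (1 - \<bar>Re (ip u v)\<bar> powr k) powr (1 / k)
                \<le> (1 - \<bar>Re (ip u w)\<bar> powr k) powr (1 / k) + (1 - \<bar>Re (ip w v)\<bar> powr k) powr (1 / k)
            \<and> sqrt (1 - \<bar>Re (ip u v)\<bar>^2)
                \<le> sqrt (1 - \<bar>Re (ip u w)\<bar>^2) + sqrt (1 - \<bar>Re (ip w v)\<bar>^2))"
  using P1 P2 P3 by (intro conjI)

end
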